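(* Let $(A,+,\circ)$ be a finite skew brace and let $(A,r_A)$ be its associated sb-solution. If $A$ is supersoluble, then the solution $(A,r_A)$ is supersoluble at $0$ (i.e. $(A,r_A)$ is a supersoluble sb-solution).
   Context: A skew brace is a set $A$ with two group structures $(A,+)$ and $(A,\circ)$ such that $a\circ(b+c)=a\circ b-a+a\circ c$ for all $a,b,c\in A$; the identities of both groups coincide and are denoted $0$. For $a\in A$ put $\lambda_a(b)=-a+a\circ b$; then $\lambda_a\in\mathrm{Aut}(A,+)$ and $a\mapsto\lambda_a$ is a homomorphism from $(A,\circ)$. An ideal of $A$ is a subgroup $I$ of $(A,+)$ with $\lambda_a(I)=I$ for all $a$, normal in both $(A,+)$ and $(A,\circ)$. A finite skew brace is supersoluble if there is a chain of ideals $\{0\}=I_0\subseteq I_1\subseteq\dots\subseteq I_m=A$ with $|I_{i+1}/I_i|$ prime for all $i$. A solution of the Yang--Baxter equation is a pair $(X,r)$ with $r(x,y)=(\lambda_x(y),\rho_y(x))$ a bijection of $X\times X$ satisfying $r_{12}r_{23}r_{12}=r_{23}r_{12}r_{23}$ (where $r_{12}=r\times\mathrm{id}_X$, $r_{23}=\mathrm{id}_X\times r$), with all $\lambda_x,\rho_x$ bijective. The sb-solution associated with $A$ is $(A,r_A)$ with $r_A(a,b)=(\lambda_a(b),\lambda_a(b)^{-1}\circ a\circ b)$, where $^{-1}$ is the inverse in $(A,\circ)$. A solution $(X,r)$ is trivial if $|X|\ge 2$ and $r(x,y)=(y,x)$. A morphism $f:(X,r)\to(Y,s)$ of solutions is a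 map $f:X\to Y$ with $(f\times f)\circ r=s\circ(f\times f)$; write $x\sim_f y$ iff $f(x)=f(y)$. If $Z\subseteq X$ satisfies $\lambda_x(Z)=Z=\rho_x(Z)$ for all $x\in X$, then $s$ restricts to a solution on $f(Z)$. A finite solution $(X,r)$ is supersoluble at $x_0\in X$ if there is a chain of subsets $\{x_0\}=X_0\subseteq X_1\subseteq\dots\subseteq X_m=X$ and, for each $i=0,\dots,m-1$, a solution $(Y_i,s_i)$ and a morphism $f_i:(X,r)\to(Y_i,s_i)$ such that: (1) $X_i$ is an equivalence class of $\sim_{f_i}$; (2) all equivalence classes of $\sim_{f_i}$ have size $|X_i|$; (3) $X_{i+1}$ is a union of equivalence classes of $\sim_{f_i}$; (4) $\lambda_x(X_{i+1})=X_{i+1}$ and $\rho_x(X_{i+1})=X_{i+1}$ for all $x\in X$; (5) the restriction of $s_i$ to $f_i(X_{i+1})\times f_i(X_{i+1})$ is a trivial solution on $f_i(X_{i+1})$ of prime cardinality. An sb-solution $(A,r_A)$ is called supersoluble if it is supersoluble at $0$. *)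

theory Defs
  imports "HOL-Algebra.Coset" "HOL-Computational_Algebra.Primes"
begin

definition add_grp :: "'a set \<Rightarrow> ('a \<Rightarrow> 'a \<Rightarrow> 'a) \<Rightarrow> 'a \<Rightarrow> 'a monoid" where
  "add_grp A add zero = \<lparr>carrier = A, monoid.mult = add, one = zero\<rparr>"

definition mul_grp :: "'a set \<Rightarrow> ('a \<Rightarrow> 'a \<Rightarrow> 'a) \<Rightarrow> 'a \<Rightarrow> 'a monoid" where
  "mul_grp A mul zero = \<lparr>carrier = A, monoid.mult = mul, one = zero\<rparr>"

definition skew_brace :: "'a set \<Rightarrow> ('a \<Rightarrow> 'a \<Rightarrow> 'a) \<Rightarrow> ('a \<Rightarrow> 'a \<Rightarrow> 'a) \<Rightarrow> 'a \<Rightarrow> bool" where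
  "skew_brace A add mul zero \<longleftrightarrow>
     group (add_grp A add zero) \<and> group (mul_grp A mul zero) \<and>
     (\<forall>a\<in>A. \<forall>b\<in>A. \<forall>c\<in>A.
        mul a (add b c) = add (mul a b) (add (inv\<^bsub>add_grp A add zero\<^esub> a) (mul a c)))"

definition brace_lambda :: "'a set \<Rightarrow> ('a \<Rightarrow> 'a \<Rightarrow> 'a) \<Rightarrow> ('a \<Rightarrow> 'a \<Rightarrow> 'a) \<Rightarrow> 'a \<Rightarrow> 'a \<Rightarrow> 'a \<Rightarrow> 'a" where
  "brace_lambda A add mul zero a b = add (inv\<^bsub>add_grp A add zero\<^esub> a) (mul a b)"

definition brace_ideal :: "'a set \<Rightarrow> ('a \<Rightarrow> 'a \<Rightarrow> 'a) \<Rightarrow> ('a \<Rightarrow> 'a \<Rightarrow> 'a) \<Rightarrow> 'a \<Rightarrow> 'a set \<Rightarrow> bool" where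
  "brace_ideal A add mul zero I \<longleftrightarrow>
     subgroup I (add_grp A add zero) \<and>
     (\<forall>a\<in>A. brace_lambda A add mul zero a ` I = I) \<and>
     I \<lhd> add_grp A add zero \<and> I \<lhd> mul_grp A mul zero"

definition supersoluble_brace :: "'a set \<Rightarrow> ('a \<Rightarrow> 'a \<Rightarrow> 'a) \<Rightarrow> ('a \<Rightarrow> 'a \<Rightarrow> 'a) \<Rightarrow> 'a \<Rightarrow> bool" where
  "supersoluble_brace A add mul zero \<longleftrightarrow>
     finite A \<and>
     (\<exists>(I :: nat \<Rightarrow> 'a set) m. I 0 = {zero} \<and> I m = A \<and>
        (\<forall>i\<le>m. brace_ideal A add mul zero (I i)) \<and>
        (\<forall>i<m. I i \<subseteq> I (Suc i) \<and> prime (card (I (Suc i)) div card (I i))))"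

definition sol_lambda :: "('a \<times> 'a \<Rightarrow> 'a \<times> 'a) \<Rightarrow> 'a \<Rightarrow> 'a \<Rightarrow> 'a" where
  "sol_lambda r x y = fst (r (x, y))"

definition sol_rho :: "('a \<times> 'a \<Rightarrow> 'a \<times> 'a) \<Rightarrow> 'a \<Rightarrow> 'a \<Rightarrow> 'a" where
  "sol_rho r y x = snd (r (x, y))"

definition r12 :: "('a \<times> 'a \<Rightarrow> 'a \<times> 'a) \<Rightarrow> 'a \<times> 'a \<times> 'a \<Rightarrow> 'a \<times> 'a \<times> 'a" where
  "r12 r t = (case t of (x, y, z) \<Rightarrow> (let (u, v) = r (x, y) in (u, v, z)))"

definition r23 :: "('a \<times> 'a \<Rightarrow> 'a \<times> 'a) \<Rightarrow> 'a \<times> 'a \<times> 'a \<Rightarrow> 'a \<times> 'a \<times> 'a" where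
  "r23 r t = (case t of (x, y, z) \<Rightarrow> (let (v, w) = r (y, z) in (x, v, w)))"

definition solution :: "'a set \<Rightarrow> ('a \<times> 'a \<Rightarrow> 'a \<times> 'a) \<Rightarrow> bool" where
  "solution X r \<longleftrightarrow>
     bij_betw r (X \<times> X) (X \<times> X) \<and>
     (\<forall>x\<in>X. \<forall>y\<in>X. \<forall>z\<in>X.
        r12 r (r23 r (r12 r (x, y, z))) = r23 r (r12 r (r23 r (x, y, z)))) \<and>
     (\<forall>x\<in>X. bij_betw (sol_lambda r x) X X) \<and>
     (\<forall>x\<in>X. bij_betw (sol_rho r x) X X)"

definition trivial_solution :: "'a set \<Rightarrow> ('a \<times> 'a \<Rightarrow> 'a \<times> 'a) \<Rightarrow> bool" where
  "trivial_solution X r \<longleftrightarrow> 2 \<le> card X \<and> (\<forall>x\<in>X. \<forall>y\<in>X. r (x, y) = (y, x))"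

definition sol_morphism :: "'a set \<Rightarrow> ('a \<times> 'a \<Rightarrow> 'a \<times> 'a) \<Rightarrow> 'b set \<Rightarrow> ('b \<times> 'b \<Rightarrow> 'b \<times> 'b) \<Rightarrow> ('a \<Rightarrow> 'b) \<Rightarrow> bool" where
  "sol_morphism X r Y s f \<longleftrightarrow>
     f ` X \<subseteq> Y \<and>
     (\<forall>x\<in>X. \<forall>y\<in>X. map_prod f f (r (x, y)) = s (f x, f y))"

definition fclass :: "'a set \<Rightarrow> ('a \<Rightarrow> 'b) \<Rightarrow> 'a \<Rightarrow> 'a set" where
  "fclass X f x = {y \<in> X. f y = f x}"

definition supersoluble_at :: "'a set \<Rightarrow> ('a \<times> 'a \<Rightarrow> 'a \<times> 'a) \<Rightarrow> 'a \<Rightarrow> bool" where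
  "supersoluble_at X r x0 \<longleftrightarrow>
     finite X \<and> solution X r \<and> x0 \<in> X \<and>
     (\<exists>(Xs :: nat \<Rightarrow> 'a set) m (Ys :: nat \<Rightarrow> 'a set set)
        (ss :: nat \<Rightarrow> 'a set \<times> 'a set \<Rightarrow> 'a set \<times> 'a set) (fs :: nat \<Rightarrow> 'a \<Rightarrow> 'a set).
        Xs 0 = {x0} \<and> Xs m = X \<and>
        (\<forall>i<m. Xs i \<subseteq> Xs (Suc i)) \<and>
        (\<forall>i<m.
           solution (Ys i) (ss i) \<and> sol_morphism X r (Ys i) (ss i) (fs i) \<and>
           (\<exists>x\<in>X. Xs i = fclass X (fs i) x) \<and>
           (\<forall>x\<in>X. card (fclass X (fs i) x) = card (Xs i)) \<and>
           (\<forall>x\<in>Xs (Suc i). fclass X (fs i) x \<subseteq> Xs (Suc i)) \<and>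
           Xs (Suc i) \<subseteq> X \<and>
           (\<forall>x\<in>X. sol_lambda r x ` Xs (Suc i) = Xs (Suc i) \<and>
                   sol_rho r x ` Xs (Suc i) = Xs (Suc i)) \<and>
           prime (card (fs i ` Xs (Suc i))) \<and>
           trivial_solution (fs i ` Xs (Suc i)) (ss i)))"

definition sb_solution :: "'a set \<Rightarrow> ('a \<Rightarrow> 'a \<Rightarrow> 'a) \<Rightarrow> ('a \<Rightarrow> 'a \<Rightarrow> 'a) \<Rightarrow> 'a \<Rightarrow> 'a \<times> 'a \<Rightarrow> 'a \<times> 'a" where
  "sb_solution A add mul zero p =
     (case p of (a, b) \<Rightarrow>
        (brace_lambda A add mul zero a b,
         mul (mul (inv\<^bsub>mul_grp A mul zero\<^esub> (brace_lambda A add mul zero a b)) a) b))"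

end

theory Submission
  imports Defs "HOL-Algebra.Multiplicative_Group"
begin

definition pick :: "'a set \<Rightarrow> ('a \<Rightarrow> 'b) \<Rightarrow> 'b \<Rightarrow> 'a" where
  "pick X f u = (SOME x. x \<in> X \<and> f x = u)"
definition qsol :: "'a set \<Rightarrow> ('a \<times> 'a \<Rightarrow> 'a \<times> 'a) \<Rightarrow> ('a \<Rightarrow> 'b) \<Rightarrow> 'b \<times> 'b \<Rightarrow> 'b \<times> 'b" where
  "qsol X r f p = map_prod f f (r (pick X f (fst p), pick X f (snd p)))"

lemma pick: "x \<in> X \<Longrightarrow> pick X f (f x) \<in> X \<and> f (pick X f (f x)) = f x"
  unfolding pick_def by (rule someI[of _ x]) simp

lemma bij_finite_surj: "finite S \<Longrightarrow> g ` S = S \<Longrightarrow> bij_betw g S S"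
  by (simp add: bij_betw_def eq_card_imp_inj_on)

lemma qsol:
  assumes fin: "finite X" and sol: "solution X r"
    and resp: "\<And>x x' y y'. x \<in> X \<Longrightarrow> x' \<in> X \<Longrightarrow> y \<in> X \<Longrightarrow> y' \<in> X \<Longrightarrow> f x = f x' \<Longrightarrow> f y = f y'
      \<Longrightarrow> map_prod f f (r (x, y)) = map_prod f f (r (x', y'))"
  shows "solution (f ` X) (qsol X r f) \<and> sol_morphism X r (f ` X) (qsol X r f) f"
proof -
  let ?s = "qsol X r f"
  let ?Y = "f ` X"
  have key: "?s (f x, f y) = map_prod f f (r (x, y))" if "x \<in> X" "y \<in> X" for x y
    unfolding qsol_def using pick[OF that(1), of f] pick[OF that(2), of f] that
    by (intro resp) auto
  have rb: "bij_betw r (X \<times> X) (X \<times> X)" using sol by (simp add: solution_def)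
  have rX: "fst (r (x, y)) \<in> X \<and> snd (r (x, y)) \<in> X" if "x \<in> X" "y \<in> X" for x y
    using bij_betw_apply[OF rb, of "(x, y)"] that by (simp add: mem_Times_iff)
  have key2: "?s (f x, f y) = (f (fst (r (x, y))), f (snd (r (x, y))))" if "x \<in> X" "y \<in> X" for x y
    using key[OF that] by (simp add: map_prod_def prod.case_eq_if)
  have morph: "sol_morphism X r ?Y ?s f" unfolding sol_morphism_def using key by auto
  have imgs: "?s ` (?Y \<times> ?Y) = ?Y \<times> ?Y"
  proof
    show "?s ` (?Y \<times> ?Y) \<subseteq> ?Y \<times> ?Y"
    proof
      fix p assume "p \<in> ?s ` (?Y \<times> ?Y)"
      then obtain x y where "x \<in> X" "y \<in> X" "p = ?s (f x, f y)" by auto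
      thus "p \<in> ?Y \<times> ?Y" using key2 rX by simp
    qed
  next
    show "?Y \<times> ?Y \<subseteq> ?s ` (?Y \<times> ?Y)"
    proof clarify
      fix a b assume ab: "a \<in> X" "b \<in> X"
      then obtain p where p: "p \<in> X \<times> X" "r p = (a, b)" using bij_betw_imp_surj_on[OF rb] by force
      obtain x y where "p = (x, y)" by force
      with p have "x \<in> X" "y \<in> X" "r (x, y) = (a, b)" by auto
      hence "?s (f x, f y) = (f a, f b)" using key by simp
      thus "(f a, f b) \<in> ?s ` (?Y \<times> ?Y)" using \<open>x \<in> X\<close> \<open>y \<in> X\<close> by (metis imageI mem_Times_iff fst_conv snd_conv)
    qed
  qed
  have bij: "bij_betw ?s (?Y \<times> ?Y) (?Y \<times> ?Y)" using bij_finite_surj[OF _ imgs] fin by simp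
  let ?F = "\<lambda>(a, b, c). (f a, f b, f c)"
  have F12: "r12 ?s (?F t) = ?F (r12 r t) \<and> (r12 r t) \<in> X \<times> X \<times> X" if tX: "t \<in> X \<times> X \<times> X" for t
  proof -
    obtain a b c where t: "t = (a, b, c)" "a \<in> X" "b \<in> X" "c \<in> X" using tX by auto
    have "r12 r t = (fst (r (a, b)), snd (r (a, b)), c)" using t by (simp add: r12_def prod.case_eq_if)
    moreover have "r12 ?s (?F t) = (f (fst (r (a, b))), f (snd (r (a, b))), f c)"
      using t key2[of a b] by (simp add: r12_def)
    ultimately show ?thesis using t rX[of a b] by simp
  qed
  have F23: "r23 ?s (?F t) = ?F (r23 r t) \<and> (r23 r t) \<in> X \<times> X \<times> X" if tX: "t \<in> X \<times> X \<times> X" for t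
  proof -
    obtain a b c where t: "t = (a, b, c)" "a \<in> X" "b \<in> X" "c \<in> X" using tX by auto
    have "r23 r t = (a, fst (r (b, c)), snd (r (b, c)))" using t by (simp add: r23_def prod.case_eq_if)
    moreover have "r23 ?s (?F t) = (f a, f (fst (r (b, c))), f (snd (r (b, c))))"
      using t key2[of b c] by (simp add: r23_def)
    ultimately show ?thesis using t rX[of b c] by (simp add: prod.case_eq_if mem_Times_iff)
  qed
  have ybe: "r12 ?s (r23 ?s (r12 ?s (u, v, w))) = r23 ?s (r12 ?s (r23 ?s (u, v, w)))"
    if uvw: "u \<in> ?Y" "v \<in> ?Y" "w \<in> ?Y" for u v w
  proof -
    obtain x y z where xyz: "x \<in> X" "y \<in> X" "z \<in> X" "u = f x" "v = f y" "w = f z" using uvw by auto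
    let ?t = "(x, y, z)"
    have t: "?t \<in> X \<times> X \<times> X" using xyz by simp
    have "(u, v, w) = ?F ?t" using xyz by simp
    moreover have "r12 ?s (r23 ?s (r12 ?s (?F ?t))) = ?F (r12 r (r23 r (r12 r ?t)))"
    proof -
      note a1 = F12[OF t]
      note a2 = F23[OF conjunct2[OF a1]]
      note a3 = F12[OF conjunct2[OF a2]]
      show ?thesis by (simp only: conjunct1[OF a1] conjunct1[OF a2] conjunct1[OF a3])
    qed
    moreover have "r23 ?s (r12 ?s (r23 ?s (?F ?t))) = ?F (r23 r (r12 r (r23 r ?t)))"
    proof -
      note a1 = F23[OF t]
      note a2 = F12[OF conjunct2[OF a1]]
      note a3 = F23[OF conjunct2[OF a2]]
      show ?thesis by (simp only: conjunct1[OF a1] conjunct1[OF a2] conjunct1[OF a3])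
    qed
    moreover have "r12 r (r23 r (r12 r ?t)) = r23 r (r12 r (r23 r ?t))"
      using sol xyz by (simp add: solution_def)
    ultimately show ?thesis by simp
  qed
  have lb: "bij_betw (sol_lambda ?s u) ?Y ?Y" if uY: "u \<in> ?Y" for u
  proof -
    obtain x where x: "x \<in> X" "u = f x" using uY by auto
    have lX: "bij_betw (sol_lambda r x) X X" using sol x by (simp add: solution_def)
    have e: "(sol_lambda ?s u \<circ> f) y = (f \<circ> sol_lambda r x) y" if "y \<in> X" for y
      using key2[OF x(1) that] x by (simp add: sol_lambda_def)
    have "sol_lambda ?s u ` ?Y = (sol_lambda ?s u \<circ> f) ` X" by (simp add: image_comp)
    also have "\<dots> = (f \<circ> sol_lambda r x) ` X" using e by (rule image_cong[OF refl])
    also have "\<dots> = f ` (sol_lambda r x ` X)" by (simp add: image_comp)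
    also have "\<dots> = ?Y" using lX by (simp add: bij_betw_def)
    finally have "sol_lambda ?s u ` ?Y = ?Y" .
    thus ?thesis using fin by (intro bij_finite_surj) auto
  qed
  have rb2: "bij_betw (sol_rho ?s u) ?Y ?Y" if uY: "u \<in> ?Y" for u
  proof -
    obtain x where x: "x \<in> X" "u = f x" using uY by auto
    have lX: "bij_betw (sol_rho r x) X X" using sol x by (simp add: solution_def)
    have e: "(sol_rho ?s u \<circ> f) y = (f \<circ> sol_rho r x) y" if "y \<in> X" for y
      using key2[OF that x(1)] x by (simp add: sol_rho_def)
    have "sol_rho ?s u ` ?Y = (sol_rho ?s u \<circ> f) ` X" by (simp add: image_comp)
    also have "\<dots> = (f \<circ> sol_rho r x) ` X" using e by (rule image_cong[OF refl])
    also have "\<dots> = f ` (sol_rho r x ` X)" by (simp add: image_comp)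
    also have "\<dots> = ?Y" using lX by (simp add: bij_betw_def)
    finally have "sol_rho ?s u ` ?Y = ?Y" .
    thus ?thesis using fin by (intro bij_finite_surj) auto
  qed
  show ?thesis using morph bij ybe lb rb2 unfolding solution_def by blast
qed

lemma funpow_fix_mult: "(\<sigma> ^^ d) x = x \<Longrightarrow> (\<sigma> ^^ (d * n)) x = x"
  by (induction n) (simp_all add: funpow_add)

lemma perm_prime:
  assumes fin: "finite S" and pr: "prime (card S)" and s0: "s0 \<in> S" "\<sigma> s0 = s0"
    and cl: "\<And>s. s \<in> S \<Longrightarrow> \<sigma> s \<in> S"
    and per: "\<And>s. s \<in> S \<Longrightarrow> (\<sigma> ^^ card S) s = s"
    and xS: "x \<in> S"
  shows "\<sigma> x = x"
proof (rule ccontr)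
  assume nx: "\<sigma> x \<noteq> x"
  let ?p = "card S"
  have p1: "?p > 1" using pr prime_gt_1_nat by blast
  have clk: "(\<sigma> ^^ k) s \<in> S" if "s \<in> S" for k s
    using that by (induction k) (simp_all add: cl)
  have s0k: "(\<sigma> ^^ k) s0 = s0" for k by (induction k) (simp_all add: s0)
  have pern: "(\<sigma> ^^ (?p * n)) s = s" if "s \<in> S" for s n
    using funpow_fix_mult[OF per[OF that]] .
  have ne0: "(\<sigma> ^^ k) x \<noteq> s0" for k
  proof
    assume h: "(\<sigma> ^^ k) x = s0"
    have "(\<sigma> ^^ (?p * k - k)) ((\<sigma> ^^ k) x) = (\<sigma> ^^ (?p * k)) x"
    proof -
      have "1 * k \<le> ?p * k" using p1 by (intro mult_le_mono1) simp
      hence "?p * k - k + k = ?p * k" by simp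
      thus ?thesis by (metis funpow_add comp_apply)
    qed
    hence "x = s0" using h s0k pern[OF xS] by simp
    thus False using nx s0 by simp
  qed
  have inj: "inj_on (\<lambda>k. (\<sigma> ^^ k) x) {..<?p}"
  proof (rule ccontr)
    assume "\<not> ?thesis"
    then obtain i j where ij: "i < ?p" "j < ?p" "i \<noteq> j" "(\<sigma> ^^ i) x = (\<sigma> ^^ j) x"
      unfolding inj_on_def by auto
    have gen: "\<exists>d. 0 < d \<and> d < ?p \<and> (\<sigma> ^^ d) x = x" if "i < ?p" "j < ?p" "i < j" "(\<sigma> ^^ i) x = (\<sigma> ^^ j) x" for i j
    proof -
      have "(\<sigma> ^^ (?p - i)) ((\<sigma> ^^ i) x) = (\<sigma> ^^ ?p) x"
        using that by (metis funpow_add comp_apply le_add_diff_inverse2 less_imp_le)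
      also have "\<dots> = x" using per xS by simp
      finally have e1: "(\<sigma> ^^ (?p - i)) ((\<sigma> ^^ i) x) = x" .
      have "(\<sigma> ^^ (?p - i)) ((\<sigma> ^^ j) x) = (\<sigma> ^^ (j - i)) ((\<sigma> ^^ ?p) x)"
      proof -
        have "?p - i + j = j - i + ?p" using that by simp
        thus ?thesis by (metis funpow_add comp_apply)
      qed
      also have "\<dots> = (\<sigma> ^^ (j - i)) x" using per xS by simp
      finally show ?thesis using e1 that by (intro exI[of _ "j - i"]) auto
    qed
    obtain d where d: "0 < d" "d < ?p" "(\<sigma> ^^ d) x = x"
      using ij gen[of i j] gen[of j i] by (cases "i < j") auto
    have "\<not> ?p dvd d" using d by (auto dest: dvd_imp_le)
    hence "coprime ?p d" using pr by (intro prime_imp_coprime) auto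
    hence cop: "gcd d ?p = 1" by (simp add: coprime_commute)
    obtain u v where uv: "d * u = ?p * v + 1" using bezout_nat[of d ?p] d cop by auto
    have "(\<sigma> ^^ (d * u)) x = x" using funpow_fix_mult[OF d(3)] .
    moreover have "(\<sigma> ^^ (?p * v + 1)) x = \<sigma> x"
      using pern[OF xS, of v] by (simp add: funpow_add)
    ultimately show False using uv nx by simp
  qed
  have sub: "(\<lambda>k. (\<sigma> ^^ k) x) ` {..<?p} \<subseteq> S - {s0}" using clk[OF xS] ne0 by auto
  have "card ((\<lambda>k. (\<sigma> ^^ k) x) ` {..<?p}) = ?p" using card_image[OF inj] by simp
  moreover have "card (S - {s0}) = ?p - 1" using s0 fin by simp
  moreover have "card ((\<lambda>k. (\<sigma> ^^ k) x) ` {..<?p}) \<le> card (S - {s0})"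
    using card_mono[OF _ sub] fin by simp
  ultimately show False using p1 by simp
qed


lemma (in group) ncong_mult:
  assumes N: "N \<lhd> G" and c: "x \<in> carrier G" "x' \<in> carrier G" "y \<in> carrier G" "y' \<in> carrier G"
    and h: "inv x \<otimes> x' \<in> N" "inv y \<otimes> y' \<in> N"
  shows "inv (x \<otimes> y) \<otimes> (x' \<otimes> y') \<in> N"
proof -
  have sN: "subgroup N G" using N normal_imp_subgroup by blast
  have "inv (x \<otimes> y) \<otimes> (x' \<otimes> y') = (inv y \<otimes> (inv x \<otimes> x') \<otimes> y) \<otimes> (inv y \<otimes> y')"
    using c by (simp add: inv_mult_group m_assoc) (metis inv_closed m_assoc r_inv l_one)
  moreover have "inv y \<otimes> (inv x \<otimes> x') \<otimes> y \<in> N"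
    using normal.inv_op_closed1[OF N c(3) h(1)] .
  ultimately show ?thesis using h(2) subgroup.m_closed[OF sN] by simp
qed

lemma (in group) ncong_inv:
  assumes N: "N \<lhd> G" and c: "x \<in> carrier G" "x' \<in> carrier G"
    and h: "inv x \<otimes> x' \<in> N"
  shows "inv (inv x) \<otimes> inv x' \<in> N"
proof -
  have sN: "subgroup N G" using N normal_imp_subgroup by blast
  have "inv (inv x) \<otimes> inv x' = x \<otimes> inv (inv x \<otimes> x') \<otimes> inv x"
    using c by (simp add: inv_mult_group m_assoc)
  moreover have "inv (inv x \<otimes> x') \<in> N" using subgroup.m_inv_closed[OF sN h] .
  ultimately show ?thesis using normal.inv_op_closed2[OF N c(1)] by simp
qed

locale sbrace =
  fixes A :: "'a set" and add mul :: "'a \<Rightarrow> 'a \<Rightarrow> 'a" and zero :: 'a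
  assumes sb: "skew_brace A add mul zero"
begin

definition neg where "neg x = inv\<^bsub>add_grp A add zero\<^esub> x"
definition minv where "minv x = inv\<^bsub>mul_grp A mul zero\<^esub> x"
definition lam where "lam = brace_lambda A add mul zero"
definition rh where "rh b a = mul (mul (minv (lam a b)) a) b"

lemma grpG: "group (add_grp A add zero)" using sb by (simp add: skew_brace_def)
lemma grpM: "group (mul_grp A mul zero)" using sb by (simp add: skew_brace_def)

lemma cG[simp]: "carrier (add_grp A add zero) = A" "monoid.mult (add_grp A add zero) = add"
  "one (add_grp A add zero) = zero" by (simp_all add: add_grp_def)
lemma cM[simp]: "carrier (mul_grp A mul zero) = A" "monoid.mult (mul_grp A mul zero) = mul"
  "one (mul_grp A mul zero) = zero" by (simp_all add: mul_grp_def)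

lemma zA[simp]: "zero \<in> A" using group.is_monoid[OF grpG] monoid.one_closed by fastforce
lemma addA[simp]: "x \<in> A \<Longrightarrow> y \<in> A \<Longrightarrow> add x y \<in> A"
  using monoid.m_closed[OF group.is_monoid[OF grpG]] by fastforce
lemma mulA[simp]: "x \<in> A \<Longrightarrow> y \<in> A \<Longrightarrow> mul x y \<in> A"
  using monoid.m_closed[OF group.is_monoid[OF grpM]] by fastforce
lemma negA[simp]: "x \<in> A \<Longrightarrow> neg x \<in> A"
  using group.inv_closed[OF grpG] unfolding neg_def by fastforce
lemma minvA[simp]: "x \<in> A \<Longrightarrow> minv x \<in> A"
  using group.inv_closed[OF grpM] unfolding minv_def by fastforce
lemma add_assoc[simp]: "x \<in> A \<Longrightarrow> y \<in> A \<Longrightarrow> z \<in> A \<Longrightarrow> add (add x y) z = add x (add y z)"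
  using monoid.m_assoc[OF group.is_monoid[OF grpG]] by fastforce
lemma mul_assoc[simp]: "x \<in> A \<Longrightarrow> y \<in> A \<Longrightarrow> z \<in> A \<Longrightarrow> mul (mul x y) z = mul x (mul y z)"
  using monoid.m_assoc[OF group.is_monoid[OF grpM]] by fastforce
lemma add0[simp]: "x \<in> A \<Longrightarrow> add zero x = x" "x \<in> A \<Longrightarrow> add x zero = x"
  using monoid.l_one[OF group.is_monoid[OF grpG]] monoid.r_one[OF group.is_monoid[OF grpG]] by fastforce+
lemma mul0[simp]: "x \<in> A \<Longrightarrow> mul zero x = x" "x \<in> A \<Longrightarrow> mul x zero = x"
  using monoid.l_one[OF group.is_monoid[OF grpM]] monoid.r_one[OF group.is_monoid[OF grpM]] by fastforce+
lemma addneg[simp]: "x \<in> A \<Longrightarrow> add (neg x) x = zero" "x \<in> A \<Longrightarrow> add x (neg x) = zero"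
  using group.l_inv[OF grpG] group.r_inv[OF grpG] unfolding neg_def by fastforce+
lemma mulinv[simp]: "x \<in> A \<Longrightarrow> mul (minv x) x = zero" "x \<in> A \<Longrightarrow> mul x (minv x) = zero"
  using group.l_inv[OF grpM] group.r_inv[OF grpM] unfolding minv_def by fastforce+
lemma addneg2[simp]: "x \<in> A \<Longrightarrow> y \<in> A \<Longrightarrow> add (neg x) (add x y) = y"
  "x \<in> A \<Longrightarrow> y \<in> A \<Longrightarrow> add x (add (neg x) y) = y"
  by (metis add0(1) add_assoc addneg negA)+
lemma mulinv2[simp]: "x \<in> A \<Longrightarrow> y \<in> A \<Longrightarrow> mul (minv x) (mul x y) = y"
  "x \<in> A \<Longrightarrow> y \<in> A \<Longrightarrow> mul x (mul (minv x) y) = y"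
  by (metis mul0(1) mul_assoc mulinv minvA)+
lemma neg_unique: "x \<in> A \<Longrightarrow> y \<in> A \<Longrightarrow> add x y = zero \<Longrightarrow> y = neg x"
  by (metis add0(2) addneg2(1) negA)
lemma minv_unique: "x \<in> A \<Longrightarrow> y \<in> A \<Longrightarrow> mul x y = zero \<Longrightarrow> y = minv x"
  by (metis mul0(2) mulinv2(1) minvA)
lemma negneg[simp]: "x \<in> A \<Longrightarrow> neg (neg x) = x"
  by (metis addneg(1) negA neg_unique)
lemma minvminv[simp]: "x \<in> A \<Longrightarrow> minv (minv x) = x"
  by (metis mulinv(1) minvA minv_unique)
lemma neg0[simp]: "neg zero = zero" by (metis add0(1) neg_unique zA)
lemma minv0[simp]: "minv zero = zero" by (metis mul0(1) minv_unique zA)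
lemma negadd[simp]: "x \<in> A \<Longrightarrow> y \<in> A \<Longrightarrow> neg (add x y) = add (neg y) (neg x)"
  by (metis addA addneg(2) addneg2(1) add_assoc negA neg_unique)
lemma minvmul[simp]: "x \<in> A \<Longrightarrow> y \<in> A \<Longrightarrow> minv (mul x y) = mul (minv y) (minv x)"
  by (metis mulA mulinv(2) mulinv2(1) mul_assoc minvA minv_unique)
lemma add_cancel: "x \<in> A \<Longrightarrow> y \<in> A \<Longrightarrow> z \<in> A \<Longrightarrow> add x y = add x z \<Longrightarrow> y = z"
  by (metis addneg2(1))
lemma mul_cancel: "x \<in> A \<Longrightarrow> y \<in> A \<Longrightarrow> z \<in> A \<Longrightarrow> mul x y = mul x z \<Longrightarrow> y = z"
  by (metis mulinv2(1))
lemma add_cancel_r: "x \<in> A \<Longrightarrow> y \<in> A \<Longrightarrow> z \<in> A \<Longrightarrow> add y x = add z x \<Longrightarrow> y = z"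
  by (metis add0(2) add_assoc addneg(2) negA)
lemma mul_cancel_r: "x \<in> A \<Longrightarrow> y \<in> A \<Longrightarrow> z \<in> A \<Longrightarrow> mul y x = mul z x \<Longrightarrow> y = z"
  by (metis mul0(2) mul_assoc mulinv(2) minvA)

lemma distr: "a \<in> A \<Longrightarrow> b \<in> A \<Longrightarrow> c \<in> A \<Longrightarrow> mul a (add b c) = add (mul a b) (add (neg a) (mul a c))"
  using sb unfolding skew_brace_def neg_def by blast

lemma lam_def2: "lam a b = add (neg a) (mul a b)"
  unfolding lam_def brace_lambda_def neg_def by simp
lemma lamA[simp]: "a \<in> A \<Longrightarrow> b \<in> A \<Longrightarrow> lam a b \<in> A" by (simp add: lam_def2)
lemma rhA[simp]: "a \<in> A \<Longrightarrow> b \<in> A \<Longrightarrow> rh b a \<in> A" by (simp add: rh_def)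

lemma lam_add: "a \<in> A \<Longrightarrow> b \<in> A \<Longrightarrow> c \<in> A \<Longrightarrow> lam a (add b c) = add (lam a b) (lam a c)"
  by (simp add: lam_def2 distr)
lemma lam0[simp]: "a \<in> A \<Longrightarrow> lam a zero = zero" by (simp add: lam_def2)
lemma lam0'[simp]: "b \<in> A \<Longrightarrow> lam zero b = b" by (simp add: lam_def2)
lemma lam_neg: "a \<in> A \<Longrightarrow> b \<in> A \<Longrightarrow> lam a (neg b) = neg (lam a b)"
proof -
  assume a: "a \<in> A" "b \<in> A"
  have "add (lam a b) (lam a (neg b)) = zero" using lam_add[of a b "neg b"] a by simp
  thus ?thesis using a neg_unique by simp
qed
lemma mul_lam: "a \<in> A \<Longrightarrow> b \<in> A \<Longrightarrow> mul a b = add a (lam a b)" by (simp add: lam_def2)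
lemma lam_mul: "a \<in> A \<Longrightarrow> b \<in> A \<Longrightarrow> c \<in> A \<Longrightarrow> lam (mul a b) c = lam a (lam b c)"
proof -
  assume a: "a \<in> A" "b \<in> A" "c \<in> A"
  have "lam a (lam b c) = add (lam a (neg b)) (lam a (mul b c))"
    using a by (simp add: lam_def2[of b c] lam_add)
  also have "\<dots> = add (neg (lam a b)) (lam a (mul b c))" using a by (simp add: lam_neg)
  also have "\<dots> = lam (mul a b) c" using a by (simp add: lam_def2)
  finally show ?thesis by simp
qed
lemma lam_inv[simp]: "a \<in> A \<Longrightarrow> b \<in> A \<Longrightarrow> lam (minv a) (lam a b) = b"
  by (simp add: lam_mul[symmetric])
lemma lam_inj: "a \<in> A \<Longrightarrow> b \<in> A \<Longrightarrow> c \<in> A \<Longrightarrow> lam a b = lam a c \<Longrightarrow> b = c"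
  by (metis lam_inv)

lemma L7: "x \<in> A \<Longrightarrow> y \<in> A \<Longrightarrow> mul (lam x y) (rh y x) = mul x y"
  by (simp add: rh_def)
lemma L8: "x \<in> A \<Longrightarrow> y \<in> A \<Longrightarrow> z \<in> A \<Longrightarrow> lam x (mul y z) = mul (lam x y) (lam (rh y x) z)"
proof -
  assume a: "x \<in> A" "y \<in> A" "z \<in> A"
  have "mul (lam x y) (lam (rh y x) z) = add (lam x y) (lam (lam x y) (lam (rh y x) z))"
    using a by (simp add: mul_lam[of "lam x y"])
  also have "\<dots> = add (lam x y) (lam (mul (lam x y) (rh y x)) z)"
    using a by (simp add: lam_mul)
  also have "\<dots> = add (lam x y) (lam x (lam y z))" using a by (simp add: L7 lam_mul)
  also have "\<dots> = lam x (mul y z)" using a by (simp add: mul_lam[of y z] lam_add)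
  finally show ?thesis by simp
qed
lemma L9: "x \<in> A \<Longrightarrow> y \<in> A \<Longrightarrow> z \<in> A \<Longrightarrow> rh z (rh y x) = rh (mul y z) x"
  using L8[of x y z] by (simp add: rh_def[of z "rh y x"] rh_def[of "mul y z" x]) (simp add: rh_def)
lemma rh0[simp]: "x \<in> A \<Longrightarrow> rh zero x = x" by (simp add: rh_def)
lemma rh_inv[simp]: "x \<in> A \<Longrightarrow> y \<in> A \<Longrightarrow> rh (minv y) (rh y x) = x"
  by (simp add: L9)

lemma r_eq: "sb_solution A add mul zero (a, b) = (lam a b, rh b a)"
  by (simp add: sb_solution_def rh_def lam_def minv_def)

lemma lam_bij: "x \<in> A \<Longrightarrow> bij_betw (lam x) A A"
  by (rule bij_betw_byWitness[where f'="lam (minv x)"]) (auto, metis lam_inv minvA minvminv)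
lemma rh_bij: "x \<in> A \<Longrightarrow> bij_betw (rh x) A A"
  by (rule bij_betw_byWitness[where f'="rh (minv x)"]) (auto, metis rh_inv minvA minvminv)

lemma sol: assumes fin: "finite A" shows "solution A (sb_solution A add mul zero)"
proof -
  let ?r = "sb_solution A add mul zero"
  have img: "?r ` (A \<times> A) \<subseteq> A \<times> A" by (auto simp: r_eq)
  have inj: "inj_on ?r (A \<times> A)"
  proof (rule inj_onI, clarify)
    fix x y x' y' assume a: "x \<in> A" "y \<in> A" "x' \<in> A" "y' \<in> A" and e: "?r (x, y) = ?r (x', y')"
    hence e1: "lam x y = lam x' y'" and e2: "rh y x = rh y' x'" by (auto simp: r_eq)
    have "mul x y = mul x' y'" using L7[of x y] L7[of x' y'] e1 e2 a by simp
    hence "neg x = neg x'" using e1 a unfolding lam_def2 by (metis add_cancel_r mulA negA)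
    hence "x = x'" using a by (metis negneg)
    moreover have "y = y'" using \<open>mul x y = mul x' y'\<close> calculation a mul_cancel by blast
    ultimately show "x = x' \<and> y = y'" by simp
  qed
  have bij: "bij_betw ?r (A \<times> A) (A \<times> A)"
    using endo_inj_surj[OF _ img inj] fin inj by (simp add: bij_betw_def)
  have ybe: "r12 ?r (r23 ?r (r12 ?r (x, y, z))) = r23 ?r (r12 ?r (r23 ?r (x, y, z)))"
    if a: "x \<in> A" "y \<in> A" "z \<in> A" for x y z
  proof -
    have L: "r12 ?r (r23 ?r (r12 ?r (x, y, z))) =
      (lam (lam x y) (lam (rh y x) z), rh (lam (rh y x) z) (lam x y), rh z (rh y x))"
      by (simp add: r12_def r23_def r_eq)
    have R: "r23 ?r (r12 ?r (r23 ?r (x, y, z))) =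
      (lam x (lam y z), lam (rh (lam y z) x) (rh z y), rh (rh z y) (rh (lam y z) x))"
      by (simp add: r12_def r23_def r_eq)
    have c1: "lam (lam x y) (lam (rh y x) z) = lam x (lam y z)"
      using a by (simp add: lam_mul[symmetric] L7)
    have c3: "rh z (rh y x) = rh (rh z y) (rh (lam y z) x)"
      using a by (simp add: L9 L7)
    have p1: "mul (lam (lam x y) (lam (rh y x) z)) (mul (rh (lam (rh y x) z) (lam x y)) (rh z (rh y x)))
       = mul x (mul y z)"
    proof -
      have "mul (lam (lam x y) (lam (rh y x) z)) (mul (rh (lam (rh y x) z) (lam x y)) (rh z (rh y x)))
        = mul (mul (lam x y) (lam (rh y x) z)) (rh z (rh y x))"
        using a by (simp add: L7[of "lam x y" "lam (rh y x) z", symmetric])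
      also have "\<dots> = mul (lam x y) (mul (rh y x) z)" using a by (simp add: L7)
      also have "\<dots> = mul x (mul y z)" using a mul_assoc[of "lam x y" "rh y x" z] L7[of x y] by simp
      finally show ?thesis .
    qed
    have p2: "mul (lam x (lam y z)) (mul (lam (rh (lam y z) x) (rh z y)) (rh (rh z y) (rh (lam y z) x)))
       = mul x (mul y z)"
    proof -
      have "mul (lam x (lam y z)) (mul (lam (rh (lam y z) x) (rh z y)) (rh (rh z y) (rh (lam y z) x)))
        = mul (lam x (lam y z)) (mul (rh (lam y z) x) (rh z y))"
        using a by (simp add: L7)
      also have "\<dots> = mul (mul (lam x (lam y z)) (rh (lam y z) x)) (rh z y)" using a by simp
      also have "\<dots> = mul x (mul (lam y z) (rh z y))" using a by (simp add: L7)
      also have "\<dots> = mul x (mul y z)" using a by (simp add: L7)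
      finally show ?thesis .
    qed
    have c2: "rh (lam (rh y x) z) (lam x y) = lam (rh (lam y z) x) (rh z y)"
    proof -
      have "mul (lam x (lam y z)) (mul (rh (lam (rh y x) z) (lam x y)) (rh (rh z y) (rh (lam y z) x)))
         = mul (lam x (lam y z)) (mul (lam (rh (lam y z) x) (rh z y)) (rh (rh z y) (rh (lam y z) x)))"
        using p1 p2 unfolding c1 c3 by (rule trans[OF _ sym])
      hence "mul (rh (lam (rh y x) z) (lam x y)) (rh (rh z y) (rh (lam y z) x))
         = mul (lam (rh (lam y z) x) (rh z y)) (rh (rh z y) (rh (lam y z) x))"
        by (rule mul_cancel[rotated 3]) (use a in simp_all)
      thus ?thesis by (rule mul_cancel_r[rotated 3]) (use a in simp_all)
    qed
    show ?thesis using L R c1 c2 c3 by simp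
  qed
  have sl: "sol_lambda ?r x = lam x" for x by (simp add: fun_eq_iff sol_lambda_def r_eq)
  have sr: "sol_rho ?r x = rh x" for x by (simp add: fun_eq_iff sol_rho_def r_eq)
  show ?thesis unfolding solution_def using bij ybe sl sr lam_bij rh_bij by simp
qed


context
  fixes I assumes idl: "brace_ideal A add mul zero I"
begin

lemma nG: "I \<lhd> add_grp A add zero" using idl by (simp add: brace_ideal_def)
lemma nM: "I \<lhd> mul_grp A mul zero" using idl by (simp add: brace_ideal_def)
lemma sG: "subgroup I (add_grp A add zero)" using nG normal_imp_subgroup by blast
lemma sM: "subgroup I (mul_grp A mul zero)" using nM normal_imp_subgroup by blast
lemma IA: "I \<subseteq> A" using subgroup.subset[OF sG] by simp
lemma Ilam: "a \<in> A \<Longrightarrow> lam a ` I = I" using idl by (simp add: brace_ideal_def lam_def)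
lemma I0: "zero \<in> I" using subgroup.one_closed[OF sG] by simp

definition cg where "cg x y \<longleftrightarrow> x \<in> A \<and> y \<in> A \<and> add (neg x) y \<in> I"

lemma cg_m: "x \<in> A \<Longrightarrow> y \<in> A \<Longrightarrow> add (neg x) y \<in> I \<longleftrightarrow> mul (minv x) y \<in> I"
proof -
  assume a: "x \<in> A" "y \<in> A"
  have e: "add (neg x) y = lam x (mul (minv x) y)" using a by (simp add: lam_def2)
  show ?thesis
  proof
    assume "add (neg x) y \<in> I"
    then obtain i where "i \<in> I" "lam x i = lam x (mul (minv x) y)" using e Ilam[OF a(1)] by (metis imageE)
    thus "mul (minv x) y \<in> I" using a IA lam_inj by (metis minvA mulA subsetD)
  next
    assume "mul (minv x) y \<in> I"
    thus "add (neg x) y \<in> I" using e Ilam[OF a(1)] by (metis imageI)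
  qed
qed

lemma cg_add: assumes "cg x x'" "cg y y'" shows "cg (add x y) (add x' y')"
proof -
  have c: "x \<in> A" "x' \<in> A" "y \<in> A" "y' \<in> A" and h: "add (neg x) x' \<in> I" "add (neg y) y' \<in> I"
    using assms unfolding cg_def by auto
  have "inv\<^bsub>add_grp A add zero\<^esub> (x \<otimes>\<^bsub>add_grp A add zero\<^esub> y) \<otimes>\<^bsub>add_grp A add zero\<^esub> (x' \<otimes>\<^bsub>add_grp A add zero\<^esub> y') \<in> I"
    by (rule group.ncong_mult[OF grpG nG]) (use c h in \<open>simp_all add: neg_def\<close>)
  hence "add (neg (add x y)) (add x' y') \<in> I" by (simp only: cG neg_def)
  thus ?thesis using c unfolding cg_def by simp
qed
lemma cg_neg: assumes "cg x x'" shows "cg (neg x) (neg x')"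
proof -
  have c: "x \<in> A" "x' \<in> A" and h: "add (neg x) x' \<in> I"
    using assms unfolding cg_def by auto
  have "inv\<^bsub>add_grp A add zero\<^esub> (inv\<^bsub>add_grp A add zero\<^esub> x) \<otimes>\<^bsub>add_grp A add zero\<^esub> (inv\<^bsub>add_grp A add zero\<^esub> x') \<in> I"
    by (rule group.ncong_inv[OF grpG nG]) (use c h in \<open>simp_all add: neg_def\<close>)
  hence "add (neg (neg x)) (neg x') \<in> I" by (simp only: cG neg_def)
  thus ?thesis using c unfolding cg_def by simp
qed
lemma cg_mul: assumes "cg x x'" "cg y y'" shows "cg (mul x y) (mul x' y')"
proof -
  have c: "x \<in> A" "x' \<in> A" "y \<in> A" "y' \<in> A" and h: "mul (minv x) x' \<in> I" "mul (minv y) y' \<in> I"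
    using assms cg_m unfolding cg_def by auto
  have "inv\<^bsub>mul_grp A mul zero\<^esub> (x \<otimes>\<^bsub>mul_grp A mul zero\<^esub> y) \<otimes>\<^bsub>mul_grp A mul zero\<^esub> (x' \<otimes>\<^bsub>mul_grp A mul zero\<^esub> y') \<in> I"
    by (rule group.ncong_mult[OF grpM nM]) (use c h in \<open>simp_all add: minv_def\<close>)
  hence "mul (minv (mul x y)) (mul x' y') \<in> I" by (simp only: cM minv_def)
  thus ?thesis using c cg_m unfolding cg_def by simp
qed
lemma cg_minv: assumes "cg x x'" shows "cg (minv x) (minv x')"
proof -
  have c: "x \<in> A" "x' \<in> A" and h: "mul (minv x) x' \<in> I"
    using assms cg_m unfolding cg_def by auto
  have "inv\<^bsub>mul_grp A mul zero\<^esub> (inv\<^bsub>mul_grp A mul zero\<^esub> x) \<otimes>\<^bsub>mul_grp A mul zero\<^esub> (inv\<^bsub>mul_grp A mul zero\<^esub> x') \<in> I"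
    by (rule group.ncong_inv[OF grpM nM]) (use c h in \<open>simp_all add: minv_def\<close>)
  hence "mul (minv (minv x)) (minv x') \<in> I" by (simp only: cM minv_def)
  thus ?thesis using c cg_m unfolding cg_def by simp
qed
lemma cg_refl: "x \<in> A \<Longrightarrow> cg x x" unfolding cg_def using I0 by simp
lemma cg_sym: "cg x y \<Longrightarrow> cg y x"
  unfolding cg_def using subgroup.m_inv_closed[OF sG, of "add (neg x) y"] by (simp add: neg_def[symmetric])
lemma cg_trans: "cg x y \<Longrightarrow> cg y z \<Longrightarrow> cg x z"
proof -
  assume h: "cg x y" "cg y z"
  hence "add (add (neg x) y) (add (neg y) z) \<in> I"
    using subgroup.m_closed[OF sG, of "add (neg x) y" "add (neg y) z"] unfolding cg_def by simp
  thus ?thesis using h unfolding cg_def by simp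
qed
lemma cg_lam: "cg a a' \<Longrightarrow> cg b b' \<Longrightarrow> cg (lam a b) (lam a' b')"
  unfolding lam_def2 by (intro cg_add cg_neg cg_mul)
lemma cg_rh: "cg a a' \<Longrightarrow> cg b b' \<Longrightarrow> cg (rh b a) (rh b' a')"
  unfolding rh_def by (intro cg_mul cg_minv cg_lam)
lemma cgA: "cg x y \<Longrightarrow> x \<in> A \<and> y \<in> A" unfolding cg_def by simp
lemma cg0: "cg zero y \<longleftrightarrow> y \<in> I" unfolding cg_def using IA by auto

definition qm where "qm x = {y \<in> A. cg x y}"

lemma qm_eq: "x \<in> A \<Longrightarrow> y \<in> A \<Longrightarrow> qm x = qm y \<longleftrightarrow> cg x y"
proof
  assume a: "x \<in> A" "y \<in> A" "qm x = qm y"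
  have "y \<in> qm y" using a cg_refl unfolding qm_def by simp
  thus "cg x y" using a unfolding qm_def by blast
next
  assume a: "x \<in> A" "y \<in> A" "cg x y"
  show "qm x = qm y" unfolding qm_def using a cg_trans cg_sym by blast
qed

lemma qm_img: "x \<in> A \<Longrightarrow> qm x = add x ` I"
proof -
  assume x: "x \<in> A"
  show ?thesis
  proof (rule Set.set_eqI, rule iffI)
    fix y assume "y \<in> qm x"
    hence y: "y \<in> A" "add (neg x) y \<in> I" unfolding qm_def cg_def by auto
    have "y = add x (add (neg x) y)" using x y by simp
    thus "y \<in> add x ` I" using y by blast
  next
    fix y assume "y \<in> add x ` I"
    then obtain i where i: "i \<in> I" "y = add x i" by auto
    thus "y \<in> qm x" using x IA unfolding qm_def cg_def by auto
  qed
qed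

lemma qm_card: "x \<in> A \<Longrightarrow> card (qm x) = card I"
proof -
  assume x: "x \<in> A"
  have "inj_on (add x) I" using x IA by (intro inj_onI) (metis add_cancel subsetD)
  thus ?thesis using qm_img[OF x] by (simp add: card_image)
qed

lemma fclass_qm: "x \<in> A \<Longrightarrow> fclass A qm x = qm x"
  unfolding fclass_def using qm_eq cg_sym cgA unfolding qm_def by blast

lemma Imul: "x \<in> I \<Longrightarrow> y \<in> I \<Longrightarrow> mul x y \<in> I"
  using subgroup.m_closed[OF sM] by fastforce
lemma Iminv: "x \<in> I \<Longrightarrow> minv x \<in> I"
  using subgroup.m_inv_closed[OF sM] unfolding minv_def by fastforce
lemma Iadd: "x \<in> I \<Longrightarrow> y \<in> I \<Longrightarrow> add x y \<in> I"
  using subgroup.m_closed[OF sG] by fastforce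
lemma Ineg: "x \<in> I \<Longrightarrow> neg x \<in> I"
  using subgroup.m_inv_closed[OF sG] unfolding neg_def by fastforce

lemma qm0: "qm zero = I" unfolding qm_def using cg0 IA by auto

lemma rh_ideal: assumes fin: "finite A" and x: "x \<in> A" shows "rh x ` I = I"
proof -
  have sub: "rh x ` I \<subseteq> I"
  proof
    fix y assume "y \<in> rh x ` I"
    then obtain j where j: "j \<in> I" "y = rh x j" by auto
    have "cg j zero" using j cg0 cg_sym by blast
    hence "cg (rh x j) (rh x zero)" using cg_rh cg_refl x by blast
    moreover have "rh x zero = zero" using x by (simp add: rh_def)
    ultimately show "y \<in> I" using j cg0 cg_sym by metis
  qed
  have "inj_on (rh x) I" using rh_bij[OF x] IA bij_betw_def inj_on_subset by metis
  thus ?thesis using endo_inj_surj[OF _ sub] finite_subset[OF IA fin] by simp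
qed

lemma qm_disj: "x \<in> A \<Longrightarrow> y \<in> A \<Longrightarrow> qm x \<noteq> qm y \<Longrightarrow> qm x \<inter> qm y = {}"
proof (rule ccontr)
  assume a: "x \<in> A" "y \<in> A" "qm x \<noteq> qm y" "qm x \<inter> qm y \<noteq> {}"
  then obtain z where "cg x z" "cg y z" unfolding qm_def by auto
  hence "cg x y" using cg_sym cg_trans by blast
  thus False using a qm_eq by blast
qed

end

definition mpow where "mpow a n = a [^]\<^bsub>mul_grp A mul zero\<^esub> (n::nat)"
lemma mpowA[simp]: "a \<in> A \<Longrightarrow> mpow a n \<in> A"
  using monoid.nat_pow_closed[OF group.is_monoid[OF grpM]] unfolding mpow_def by fastforce
lemma mpow0[simp]: "mpow a 0 = zero" unfolding mpow_def by simp
lemma mpowS: "a \<in> A \<Longrightarrow> mpow a (Suc n) = mul a (mpow a n)"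
  using monoid.nat_pow_Suc2[OF group.is_monoid[OF grpM]] unfolding mpow_def by fastforce

lemma pow_I:
  assumes I: "brace_ideal A add mul zero I" and J: "brace_ideal A add mul zero J" and IJ: "I \<subseteq> J"
    and a: "a \<in> J"
  shows "mpow a (card (qm I ` J)) \<in> I"
proof -
  let ?M = "mul_grp A mul zero"
  let ?Mj = "?M\<lparr>carrier := J\<rparr>"
  have sJ: "subgroup J ?M" using sM[OF J] .
  have gMj: "group ?Mj" using subgroup.subgroup_is_group[OF sJ grpM] .
  have nI: "I \<lhd> ?Mj" using group.normal_restrict_supergroup[OF grpM sJ nM[OF I] IJ] .
  have gH: "group (?Mj Mod I)" using normal.factorgroup_is_group[OF nI] .
  have JA: "J \<subseteq> A" using IA[OF J] .
  have rc: "I #>\<^bsub>?Mj\<^esub> x = qm I x" if x: "x \<in> J" for x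
  proof (rule Set.set_eqI, rule iffI)
    fix y assume "y \<in> I #>\<^bsub>?Mj\<^esub> x"
    then obtain h where h: "h \<in> I" "y = mul h x" unfolding r_coset_def by auto
    have xA: "x \<in> A" "h \<in> A" using x JA h IA[OF I] by auto
    have "inv\<^bsub>?M\<^esub> x \<otimes>\<^bsub>?M\<^esub> h \<otimes>\<^bsub>?M\<^esub> x \<in> I" using normal.inv_op_closed1[OF nM[OF I], of x h] xA h by simp
    hence "mul (minv x) y \<in> I" using h xA by (simp flip: minv_def)
    moreover have yA: "y \<in> A" using h xA by simp
    ultimately have "add (neg x) y \<in> I" using cg_m[OF I, of x y] xA by simp
    thus "y \<in> qm I x" using xA yA by (simp add: qm_def[OF I] cg_def[OF I])
  next
    fix y assume "y \<in> qm I x"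
    hence y: "y \<in> A" "mul (minv x) y \<in> I" using cg_m[OF I] x JA unfolding qm_def[OF I] cg_def[OF I] by auto
    have xA: "x \<in> A" using x JA by auto
    have "x \<otimes>\<^bsub>?M\<^esub> (mul (minv x) y) \<otimes>\<^bsub>?M\<^esub> inv\<^bsub>?M\<^esub> x \<in> I"
      using normal.inv_op_closed2[OF nM[OF I], of x "mul (minv x) y"] xA y by simp
    hence hI: "mul y (minv x) \<in> I" using xA y by (simp add: minv_def[symmetric])
    have "y = mul (mul y (minv x)) x" using xA y by simp
    thus "y \<in> I #>\<^bsub>?Mj\<^esub> x" using hI unfolding r_coset_def by auto
  qed
  have car: "carrier (?Mj Mod I) = qm I ` J"
    unfolding carrier_FactGroup using rc by simp
  have "(I #>\<^bsub>?Mj\<^esub> a) [^]\<^bsub>?Mj Mod I\<^esub> order (?Mj Mod I) = \<one>\<^bsub>?Mj Mod I\<^esub>"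
    using group.pow_order_eq_1[OF gH] car rc a by simp
  hence "I #>\<^bsub>?Mj\<^esub> (a [^]\<^bsub>?Mj\<^esub> card (qm I ` J)) = I"
    using normal.FactGroup_pow[OF nI, of a] a car by (simp add: order_def)
  moreover have "a [^]\<^bsub>?Mj\<^esub> card (qm I ` J) = mpow a (card (qm I ` J))"
    using monoid.nat_pow_consistent[OF group.is_monoid[OF grpM]] unfolding mpow_def by metis
  moreover have "a [^]\<^bsub>?Mj\<^esub> card (qm I ` J) \<in> J"
    using monoid.nat_pow_closed[OF group.is_monoid[OF gMj]] a by simp
  moreover have "subgroup I ?Mj" using nI normal_imp_subgroup by blast
  ultimately show ?thesis using group.rcos_self[OF gMj, of "a [^]\<^bsub>?Mj\<^esub> card (qm I ` J)" I] by simp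
qed

definition lift :: "'a set \<Rightarrow> ('a \<Rightarrow> 'a) \<Rightarrow> 'a set \<Rightarrow> 'a set" where
  "lift I h C = qm I (h (SOME y. y \<in> C))"

lemma lift_eq:
  assumes I: "brace_ideal A add mul zero I" and b: "b \<in> A"
    and resp: "\<And>x y. cg I x y \<Longrightarrow> cg I (h x) (h y)"
  shows "lift I h (qm I b) = qm I (h b)"
proof -
  have "b \<in> qm I b" using b cg_refl[OF I b] by (simp add: qm_def[OF I])
  hence "(SOME y. y \<in> qm I b) \<in> qm I b" by (rule someI)
  hence "cg I b (SOME y. y \<in> qm I b)" by (simp add: qm_def[OF I])
  hence c: "cg I (h b) (h (SOME y. y \<in> qm I b))" by (rule resp)
  show ?thesis unfolding lift_def using qm_eq[OF I] cgA[OF I c] c cg_sym[OF I c] by metis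
qed

lemma funpowA: "(\<And>x. x \<in> S \<Longrightarrow> h x \<in> S) \<Longrightarrow> b \<in> S \<Longrightarrow> (h ^^ k) b \<in> S"
  by (induction k) auto

lemma lift_pow:
  assumes I: "brace_ideal A add mul zero I" and b: "b \<in> A"
    and resp: "\<And>x y. cg I x y \<Longrightarrow> cg I (h x) (h y)" and hA: "\<And>x. x \<in> A \<Longrightarrow> h x \<in> A"
  shows "(lift I h ^^ k) (qm I b) = qm I ((h ^^ k) b)"
proof (induction k)
  case 0 then show ?case by simp
next
  case (Suc k)
  have "(h ^^ k) b \<in> A" using funpowA[of A h, OF hA b] .
  then show ?case using Suc lift_eq[OF I _ resp] by simp
qed

lemma triv_gen:
  assumes fin: "finite A" and I: "brace_ideal A add mul zero I" and J: "brace_ideal A add mul zero J"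
    and IJ: "I \<subseteq> J" and pr: "prime (card (qm I ` J))"
    and resp: "\<And>x y. cg I x y \<Longrightarrow> cg I (h x) (h y)" and hA: "\<And>x. x \<in> A \<Longrightarrow> h x \<in> A"
    and hJ: "\<And>x. x \<in> J \<Longrightarrow> h x \<in> J" and h0: "h zero = zero"
    and per: "\<And>b. b \<in> J \<Longrightarrow> cg I ((h ^^ card (qm I ` J)) b) b"
    and b: "b \<in> J"
  shows "qm I (h b) = qm I b"
proof -
  have JA: "J \<subseteq> A" using IA[OF J] .
  have "lift I h (qm I b) = qm I b"
  proof (rule perm_prime[of "qm I ` J" "qm I zero" "lift I h" "qm I b"])
    show "finite (qm I ` J)" using finite_subset[OF JA fin] by simp
    show "prime (card (qm I ` J))" by (rule pr)
    show "qm I zero \<in> qm I ` J" using I0[OF J] by simp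
    show "lift I h (qm I zero) = qm I zero" using lift_eq[OF I zA resp] h0 by simp
    show "lift I h s \<in> qm I ` J" if "s \<in> qm I ` J" for s
      using that lift_eq[OF I _ resp] hJ JA by auto
    show "(lift I h ^^ card (qm I ` J)) s = s" if "s \<in> qm I ` J" for s
    proof -
      obtain c where c: "c \<in> J" "s = qm I c" using \<open>s \<in> qm I ` J\<close> by auto
      have "(lift I h ^^ card (qm I ` J)) s = qm I ((h ^^ card (qm I ` J)) c)"
        using c lift_pow[OF I _ resp hA] JA by auto
      also have "\<dots> = qm I c" using per[OF c(1)] qm_eq[OF I] cgA[OF I] by metis
      finally show ?thesis using c by simp
    qed
    show "qm I b \<in> qm I ` J" using b by simp
  qed
  thus ?thesis using lift_eq[OF I _ resp] b JA by auto
qed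

lemma lam_pow: "a \<in> A \<Longrightarrow> b \<in> A \<Longrightarrow> (lam a ^^ k) b = lam (mpow a k) b"
  by (induction k) (simp_all add: mpowS lam_mul)

lemma conj_pow: "b \<in> A \<Longrightarrow> c \<in> A \<Longrightarrow>
  ((\<lambda>c. mul (mul b c) (minv b)) ^^ k) c = mul (mul (mpow b k) c) (minv (mpow b k))"
  by (induction k) (simp_all add: mpowS)

lemma T1:
  assumes fin: "finite A" and I: "brace_ideal A add mul zero I" and J: "brace_ideal A add mul zero J"
    and IJ: "I \<subseteq> J" and pr: "prime (card (qm I ` J))" and a: "a \<in> J" and b: "b \<in> J"
  shows "qm I (lam a b) = qm I b"
proof -
  have JA: "J \<subseteq> A" using IA[OF J] .
  have aA: "a \<in> A" using a JA by auto
  show ?thesis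
  proof (rule triv_gen[OF fin I J IJ pr, of "lam a"])
    show "cg I (lam a x) (lam a y)" if "cg I x y" for x y using cg_lam[OF I cg_refl[OF I aA] that] .
    show "lam a x \<in> A" if "x \<in> A" for x using that aA by simp
    show "lam a x \<in> J" if "x \<in> J" for x using that Ilam[OF J aA] by blast
    show "lam a zero = zero" using aA by simp
    show "b \<in> J" by (rule b)
    show "cg I ((lam a ^^ card (qm I ` J)) c) c" if c: "c \<in> J" for c
    proof -
      have cA: "c \<in> A" using c JA by auto
      have "cg I (mpow a (card (qm I ` J))) zero"
        using pow_I[OF I J IJ a] cg0[OF I] cg_sym[OF I] by blast
      hence "cg I (lam (mpow a (card (qm I ` J))) c) (lam zero c)"
        using cg_lam[OF I _ cg_refl[OF I cA]] by blast
      thus ?thesis using lam_pow[OF aA cA] cA by simp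
    qed
  qed
qed

lemma T2:
  assumes fin: "finite A" and I: "brace_ideal A add mul zero I" and J: "brace_ideal A add mul zero J"
    and IJ: "I \<subseteq> J" and pr: "prime (card (qm I ` J))" and b: "b \<in> J" and c: "c \<in> J"
  shows "qm I (mul (mul b c) (minv b)) = qm I c"
proof -
  have JA: "J \<subseteq> A" using IA[OF J] .
  have bA: "b \<in> A" using b JA by auto
  show ?thesis
  proof (rule triv_gen[OF fin I J IJ pr, of "\<lambda>c. mul (mul b c) (minv b)"])
    show "cg I (mul (mul b x) (minv b)) (mul (mul b y) (minv b))" if "cg I x y" for x y
      using cg_mul[OF I cg_mul[OF I cg_refl[OF I bA] that] cg_refl[OF I minvA[OF bA]]] .
    show "mul (mul b x) (minv b) \<in> A" if "x \<in> A" for x using that bA by simp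
    show "mul (mul b x) (minv b) \<in> J" if "x \<in> J" for x using that b Imul[OF J] Iminv[OF J] by blast
    show "mul (mul b zero) (minv b) = zero" using bA by simp
    show "c \<in> J" by (rule c)
    show "cg I (((\<lambda>c. mul (mul b c) (minv b)) ^^ card (qm I ` J)) d) d" if d: "d \<in> J" for d
    proof -
      have dA: "d \<in> A" using d JA by auto
      have "cg I (mpow b (card (qm I ` J))) zero"
        using pow_I[OF I J IJ b] cg0[OF I] cg_sym[OF I] by blast
      hence "cg I (mul (mul (mpow b (card (qm I ` J))) d) (minv (mpow b (card (qm I ` J)))))
                  (mul (mul zero d) (minv zero))"
        using cg_mul[OF I cg_mul[OF I _ cg_refl[OF I dA]] cg_minv[OF I]] by blast
      thus ?thesis using conj_pow[OF bA dA] dA by simp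
    qed
  qed
qed

lemma rho_triv:
  assumes fin: "finite A" and I: "brace_ideal A add mul zero I" and J: "brace_ideal A add mul zero J"
    and IJ: "I \<subseteq> J" and pr: "prime (card (qm I ` J))" and a: "a \<in> J" and b: "b \<in> J"
  shows "qm I (rh b a) = qm I a"
proof -
  have JA: "J \<subseteq> A" using IA[OF J] .
  have aA: "a \<in> A" and bA: "b \<in> A" using a b JA by auto
  have "cg I (lam a b) b" using T1[OF fin I J IJ pr a b] qm_eq[OF I] aA bA by simp
  hence "cg I (rh b a) (mul (mul (minv b) a) b)"
    unfolding rh_def using cg_mul[OF I cg_mul[OF I cg_minv[OF I] cg_refl[OF I aA]] cg_refl[OF I bA]] by blast
  moreover have "qm I (mul (mul (minv b) a) (minv (minv b))) = qm I a"
    using T2[OF fin I J IJ pr Iminv[OF J b] a] .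
  ultimately show ?thesis using qm_eq[OF I] cgA[OF I] bA by (metis minvminv)
qed

lemma sl_eq: "sol_lambda (sb_solution A add mul zero) x = lam x"
  by (simp add: fun_eq_iff sol_lambda_def r_eq)
lemma sr_eq: "sol_rho (sb_solution A add mul zero) x = rh x"
  by (simp add: fun_eq_iff sol_rho_def r_eq)

lemma step:
  assumes fin: "finite A" and I: "brace_ideal A add mul zero I" and J: "brace_ideal A add mul zero J"
    and IJ: "I \<subseteq> J" and pr0: "prime (card J div card I)"
  shows "solution (qm I ` A) (qsol A (sb_solution A add mul zero) (qm I)) \<and>
    sol_morphism A (sb_solution A add mul zero) (qm I ` A) (qsol A (sb_solution A add mul zero) (qm I)) (qm I) \<and>
    (\<exists>x\<in>A. I = fclass A (qm I) x) \<and>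
    (\<forall>x\<in>A. card (fclass A (qm I) x) = card I) \<and>
    (\<forall>x\<in>J. fclass A (qm I) x \<subseteq> J) \<and> J \<subseteq> A \<and>
    (\<forall>x\<in>A. sol_lambda (sb_solution A add mul zero) x ` J = J \<and>
            sol_rho (sb_solution A add mul zero) x ` J = J) \<and>
    prime (card (qm I ` J)) \<and>
    trivial_solution (qm I ` J) (qsol A (sb_solution A add mul zero) (qm I))"
proof -
  let ?r = "sb_solution A add mul zero"
  let ?s = "qsol A ?r (qm I)"
  have JA: "J \<subseteq> A" using IA[OF J] .
  have Q: "solution (qm I ` A) ?s \<and> sol_morphism A ?r (qm I ` A) ?s (qm I)"
  proof (rule qsol[OF fin sol[OF fin]])
    fix x x' y y' assume a: "x \<in> A" "x' \<in> A" "y \<in> A" "y' \<in> A" "qm I x = qm I x'" "qm I y = qm I y'"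
    hence c: "cg I x x'" "cg I y y'" using qm_eq[OF I] by auto
    have "qm I (lam x y) = qm I (lam x' y')" using cg_lam[OF I c] qm_eq[OF I] cgA[OF I] by metis
    moreover have "qm I (rh y x) = qm I (rh y' x')" using cg_rh[OF I c] qm_eq[OF I] cgA[OF I] by metis
    ultimately show "map_prod (qm I) (qm I) (?r (x, y)) = map_prod (qm I) (qm I) (?r (x', y'))"
      by (simp add: r_eq)
  qed
  have fc: "\<exists>x\<in>A. I = fclass A (qm I) x" using fclass_qm[OF I zA] qm0[OF I] by auto
  have cd: "\<forall>x\<in>A. card (fclass A (qm I) x) = card I" using fclass_qm[OF I] qm_card[OF I] by simp
  have sub: "qm I x \<subseteq> J" if x: "x \<in> J" for x
  proof
    fix y assume "y \<in> qm I x"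
    hence y: "y \<in> A" "add (neg x) y \<in> I" using x JA by (auto simp: qm_def[OF I] cg_def[OF I])
    have "y = add x (add (neg x) y)" using x JA y by auto
    moreover have "add (neg x) y \<in> J" using y IJ by auto
    hence "add x (add (neg x) y) \<in> J" using Iadd[OF J x] by blast
    ultimately show "y \<in> J" by simp
  qed
  have un: "\<Union> (qm I ` J) = J"
  proof
    show "\<Union> (qm I ` J) \<subseteq> J" using sub by auto
    show "J \<subseteq> \<Union> (qm I ` J)"
    proof
      fix x assume x: "x \<in> J"
      hence "x \<in> qm I x" using JA cg_refl[OF I] by (auto simp: qm_def[OF I])
      thus "x \<in> \<Union> (qm I ` J)" using x by auto
    qed
  qed
  have "card I * card (qm I ` J) = card (\<Union> (qm I ` J))"
  proof (rule card_partition)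
    show "finite (qm I ` J)" using finite_subset[OF JA fin] by simp
    show "finite (\<Union> (qm I ` J))" using un finite_subset[OF JA fin] by simp
    show "\<And>c. c \<in> qm I ` J \<Longrightarrow> card c = card I" using qm_card[OF I] JA by auto
    show "\<And>c1 c2. c1 \<in> qm I ` J \<Longrightarrow> c2 \<in> qm I ` J \<Longrightarrow> c1 \<noteq> c2 \<Longrightarrow> c1 \<inter> c2 = {}"
      using qm_disj[OF I] JA by auto
  qed
  hence cJ: "card J = card I * card (qm I ` J)" using un by simp
  have "card I > 0" using I0[OF I] finite_subset[OF IA[OF I] fin] card_gt_0_iff by blast
  hence pr: "prime (card (qm I ` J))" using pr0 cJ by simp
  have triv: "trivial_solution (qm I ` J) ?s"
    unfolding trivial_solution_def
  proof (intro conjI ballI)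
    show "2 \<le> card (qm I ` J)" using pr prime_ge_2_nat by blast
    fix U V assume "U \<in> qm I ` J" "V \<in> qm I ` J"
    then obtain a b where ab: "a \<in> J" "b \<in> J" "U = qm I a" "V = qm I b" by auto
    have aA: "a \<in> A" "b \<in> A" using ab JA by auto
    have "?s (qm I a, qm I b) = map_prod (qm I) (qm I) (?r (a, b))"
      using Q aA unfolding sol_morphism_def by auto
    also have "\<dots> = (qm I (lam a b), qm I (rh b a))" by (simp add: r_eq)
    also have "\<dots> = (qm I b, qm I a)"
      using T1[OF fin I J IJ pr ab(1,2)] rho_triv[OF fin I J IJ pr ab(1,2)] by simp
    finally show "?s (U, V) = (V, U)" using ab by simp
  qed
  have inv: "\<forall>x\<in>A. sol_lambda ?r x ` J = J \<and> sol_rho ?r x ` J = J"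
    using Ilam[OF J] rh_ideal[OF J fin] by (simp add: sl_eq sr_eq)
  have sub2: "\<forall>x\<in>J. fclass A (qm I) x \<subseteq> J"
  proof
    fix x assume x: "x \<in> J"
    hence "x \<in> A" using JA by auto
    thus "fclass A (qm I) x \<subseteq> J" using fclass_qm[OF I] sub[OF x] by simp
  qed
  show ?thesis using Q fc cd sub2 JA inv pr triv by blast
qed

theorem main:
  assumes fin: "finite A" and ss: "supersoluble_brace A add mul zero"
  shows "supersoluble_at A (sb_solution A add mul zero) zero"
proof -
  obtain Is :: "nat \<Rightarrow> 'a set" and m where I0: "Is 0 = {zero}" and Im: "Is m = A"
    and idl: "\<forall>i\<le>m. brace_ideal A add mul zero (Is i)"
    and ch: "\<forall>i<m. Is i \<subseteq> Is (Suc i) \<and> prime (card (Is (Suc i)) div card (Is i))"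
    using ss unfolding supersoluble_brace_def by blast
  let ?r = "sb_solution A add mul zero"
  have st: "\<forall>i<m. solution (qm (Is i) ` A) (qsol A ?r (qm (Is i))) \<and>
    sol_morphism A ?r (qm (Is i) ` A) (qsol A ?r (qm (Is i))) (qm (Is i)) \<and>
    (\<exists>x\<in>A. Is i = fclass A (qm (Is i)) x) \<and>
    (\<forall>x\<in>A. card (fclass A (qm (Is i)) x) = card (Is i)) \<and>
    (\<forall>x\<in>Is (Suc i). fclass A (qm (Is i)) x \<subseteq> Is (Suc i)) \<and> Is (Suc i) \<subseteq> A \<and>
    (\<forall>x\<in>A. sol_lambda ?r x ` Is (Suc i) = Is (Suc i) \<and>
            sol_rho ?r x ` Is (Suc i) = Is (Suc i)) \<and>
    prime (card (qm (Is i) ` Is (Suc i))) \<and>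
    trivial_solution (qm (Is i) ` Is (Suc i)) (qsol A ?r (qm (Is i)))"
  proof (intro allI impI)
    fix i assume i: "i < m"
    show "solution (qm (Is i) ` A) (qsol A ?r (qm (Is i))) \<and>
    sol_morphism A ?r (qm (Is i) ` A) (qsol A ?r (qm (Is i))) (qm (Is i)) \<and>
    (\<exists>x\<in>A. Is i = fclass A (qm (Is i)) x) \<and>
    (\<forall>x\<in>A. card (fclass A (qm (Is i)) x) = card (Is i)) \<and>
    (\<forall>x\<in>Is (Suc i). fclass A (qm (Is i)) x \<subseteq> Is (Suc i)) \<and> Is (Suc i) \<subseteq> A \<and>
    (\<forall>x\<in>A. sol_lambda ?r x ` Is (Suc i) = Is (Suc i) \<and>
            sol_rho ?r x ` Is (Suc i) = Is (Suc i)) \<and>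
    prime (card (qm (Is i) ` Is (Suc i))) \<and>
    trivial_solution (qm (Is i) ` Is (Suc i)) (qsol A ?r (qm (Is i)))"
      using step[OF fin, of "Is i" "Is (Suc i)"] idl ch i by simp
  qed
  have mono: "\<forall>i<m. Is i \<subseteq> Is (Suc i)" using ch by simp
  show ?thesis unfolding supersoluble_at_def
    apply (intro conjI)
       apply (rule fin)
      apply (rule sol[OF fin])
     apply (rule zA)
    apply (rule exI[of _ Is], rule exI[of _ m], rule exI[of _ "\<lambda>i. qm (Is i) ` A"],
        rule exI[of _ "\<lambda>i. qsol A ?r (qm (Is i))"], rule exI[of _ "\<lambda>i. qm (Is i)"])
    using I0 Im mono st by simp
qed

end

theorem theorem2p5:
  fixes A :: "'a set" and add mul :: "'a \<Rightarrow> 'a \<Rightarrow> 'a" and zero :: 'a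
  assumes "skew_brace A add mul zero"
    and "finite A"
    and "supersoluble_brace A add mul zero"
  shows "supersoluble_at A (sb_solution A add mul zero) zero"
  using sbrace.main[OF sbrace.intro[OF assms(1)] assms(2) assms(3)] .

end
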